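(* Let $n_d>2$ be an odd integer, $\mu=\frac{n_d-1}{2}$, and $\delta\in(0,1/n_d]$. Let $\varepsilon^*\ge0$ be the unique non-negative real with $\delta\sum_{x=0}^{n_d-1}e^{\varepsilon^*(\mu-|x-\mu|)}=1$. Then the distribution $P^*$ on $\{0,\dots,n_d-1\}$ given by $P^*(x)=\delta e^{\varepsilon^*(\mu-|x-\mu|)}$ (a truncated discrete Laplace distribution $P^*(x)=A e^{-\varepsilon^*|x-\mu|}$ with normalizing constant $A$) satisfies $H_{\varepsilon^*}(P^*\|P^*_+)\le\delta$ and $H_{\varepsilon^*}(P^*_+\|P^* )\le\delta$; every distribution $X$ on $\{0,\dots,n_d-1\}$ with $H_{\varepsilon}(X\|X_+)\le\delta$ and $H_{\varepsilon}(X_+\|X)\le\delta$ has $\varepsilon\ge\varepsilon^*$; and $P^*$ is the unique distribution on $\{0,\dots,n_d-1\}$ achieving this with $\varepsilon=\varepsilon^*$. Furthermore, when $\delta\in(1/n_d,1]$, the minimum such $\varepsilon$ is $0$, attained by the uniform distribution on $\{0,\dots,n_d-1\}$.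
   Context: For a distribution $X$ on $\mathbb{Z}$, $X_+$ is its shift by one, $X_+(x)=X(x-1)$. The hockey-stick divergence is $H_\varepsilon(P\|Q)=\sum_x[P(x)-e^\varepsilon Q(x)]_+$, where $[t]_+=\max\{t,0\}$. The additive noise mechanism with noise $X$ (release $n+Z$, $Z\sim X$) is $(\varepsilon,\delta)$-DP for neighboring counts differing by one iff $H_\varepsilon(X\|X_+)\le\delta$ and $H_\varepsilon(X_+\|X)\le\delta$. *)

theory Defs
  imports "HOL-Analysis.Analysis"
begin

definition shift_dist :: "(int \<Rightarrow> real) \<Rightarrow> int \<Rightarrow> real" where
  "shift_dist X = (\<lambda>x. X (x - 1))"

definition hockey_stick :: "real \<Rightarrow> (int \<Rightarrow> real) \<Rightarrow> (int \<Rightarrow> real) \<Rightarrow> real" where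
  "hockey_stick eps P Q = (\<Sum>\<^sub>\<infinity>x\<in>UNIV. max 0 (P x - exp eps * Q x))"

definition dist_on :: "nat \<Rightarrow> (int \<Rightarrow> real) \<Rightarrow> bool" where
  "dist_on n X \<longleftrightarrow> (\<forall>x. 0 \<le> X x) \<and> (\<forall>x. x \<notin> {0..int n - 1} \<longrightarrow> X x = 0)
     \<and> (\<Sum>x\<in>{0..int n - 1}. X x) = 1"

text \<open>The additive noise mechanism with noise X is (eps,delta)-DP for neighbouring counts.\<close>
definition noise_dp :: "real \<Rightarrow> real \<Rightarrow> (int \<Rightarrow> real) \<Rightarrow> bool" where
  "noise_dp eps delta X \<longleftrightarrow>
     hockey_stick eps X (shift_dist X) \<le> delta \<and> hockey_stick eps (shift_dist X) X \<le> delta"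

end

theory Submission
  imports Defs
begin

definition wt :: "nat \<Rightarrow> int \<Rightarrow> real" where
  "wt n x = (real n - 1) / 2 - \<bar>real_of_int x - (real n - 1) / 2\<bar>"

lemma infsum_fin:
  fixes f :: "int \<Rightarrow> real"
  assumes "finite S" "\<And>x. x \<notin> S \<Longrightarrow> f x = 0"
  shows "infsum f UNIV = sum f S"
proof -
  have "infsum f UNIV = infsum f S"
    by (rule infsum_cong_neutral) (use assms in auto)
  then show ?thesis using assms(1) by simp
qed

lemma hs_fwd:
  assumes "\<And>x. x \<notin> {0..int n - 1} \<Longrightarrow> X x = 0"
  shows "hockey_stick e X (shift_dist X) = (\<Sum>x\<in>{0..int n}. max 0 (X x - exp e * X (x - 1)))"
  unfolding hockey_stick_def shift_dist_def
  by (rule infsum_fin) (auto simp: assms)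

lemma hs_bwd:
  assumes "\<And>x. x \<notin> {0..int n - 1} \<Longrightarrow> X x = 0"
  shows "hockey_stick e (shift_dist X) X = (\<Sum>x\<in>{0..int n}. max 0 (X (x - 1) - exp e * X x))"
  unfolding hockey_stick_def shift_dist_def
  by (rule infsum_fin) (auto simp: assms)

lemma fwd_bound:
  fixes a :: "int \<Rightarrow> real"
  assumes z: "\<And>x. x < 0 \<Longrightarrow> a x = 0" and e: "e \<ge> 0" and k: "0 \<le> k"
  shows "a k \<le> exp (e * real_of_int k) * (\<Sum>x\<in>{0..k}. max 0 (a x - exp e * a (x - 1)))"
  using k
proof (induction k rule: int_ge_induct)
  case base
  then show ?case using z[of "-1"] by simp
next
  case (step i)
  define S where "S = (\<Sum>x\<in>{0..i}. max 0 (a x - exp e * a (x - 1)))"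
  define t where "t = max 0 (a (i+1) - exp e * a i)"
  have S0: "S \<ge> 0" unfolding S_def by (intro sum_nonneg) auto
  have t0: "t \<ge> 0" unfolding t_def by simp
  have set: "{0..i+1} = insert (i+1) {0..i}" using step.hyps by auto
  have sum: "(\<Sum>x\<in>{0..i+1}. max 0 (a x - exp e * a (x - 1))) = t + S"
    unfolding set S_def t_def by simp
  have g1: "exp (e * real_of_int (i+1)) \<ge> 1" using e step.hyps by simp
  have "a (i+1) \<le> exp e * a i + t" unfolding t_def by simp
  also have "\<dots> \<le> exp e * (exp (e * real_of_int i) * S) + t"
    using step.IH S_def by (intro add_right_mono mult_left_mono) auto
  also have "exp e * (exp (e * real_of_int i) * S) = exp (e * real_of_int (i+1)) * S"
    by (simp add: distrib_left exp_add[symmetric] algebra_simps)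
  also have "exp (e * real_of_int (i+1)) * S + t \<le> exp (e * real_of_int (i+1)) * S + exp (e * real_of_int (i+1)) * t"
    using g1 t0 by (intro add_left_mono) (simp add: mult_le_cancel_right1 )
  finally show ?case unfolding sum by (simp add: algebra_simps)
qed


lemma key_bound:
  assumes d: "dist_on n X" and dp: "noise_dp e d X" and e: "e \<ge> 0"
    and k: "0 \<le> k" "k \<le> int n - 1"
  shows "X k \<le> d * exp (e * wt n k)"
proof -
  have nn: "\<And>x. 0 \<le> X x" and z: "\<And>x. x \<notin> {0..int n - 1} \<Longrightarrow> X x = 0"
    using d unfolding dist_on_def by auto
  have h1: "(\<Sum>x\<in>{0..int n}. max 0 (X x - exp e * X (x - 1))) \<le> d"
    using dp hs_fwd[of n X e, OF z] unfolding noise_dp_def by simp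
  have h2: "(\<Sum>x\<in>{0..int n}. max 0 (X (x - 1) - exp e * X x)) \<le> d"
    using dp hs_bwd[of n X e, OF z] unfolding noise_dp_def by simp
  have f: "X k \<le> d * exp (e * real_of_int k)"
  proof -
    have "X k \<le> exp (e * real_of_int k) * (\<Sum>x\<in>{0..k}. max 0 (X x - exp e * X (x - 1)))"
      by (rule fwd_bound) (use z e k in auto)
    also have "\<dots> \<le> exp (e * real_of_int k) * (\<Sum>x\<in>{0..int n}. max 0 (X x - exp e * X (x - 1)))"
      using k by (intro mult_left_mono sum_mono2) auto
    also have "\<dots> \<le> exp (e * real_of_int k) * d" using h1 by simp
    finally show ?thesis by (simp add: mult.commute)
  qed
  define b where "b = (\<lambda>y. X (int n - 1 - y))"
  have bk: "X k = b (int n - 1 - k)" unfolding b_def by simp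
  have re: "(\<Sum>y\<in>{0..int n}. max 0 (b y - exp e * b (y - 1))) = (\<Sum>x\<in>{0..int n}. max 0 (X (x - 1) - exp e * X x))"
    unfolding b_def
    by (rule sum.reindex_bij_witness[of _ "\<lambda>x. int n - x" "\<lambda>x. int n - x"]) (auto simp: algebra_simps)
  have g: "X k \<le> d * exp (e * real_of_int (int n - 1 - k))"
  proof -
    have "X k \<le> exp (e * real_of_int (int n - 1 - k)) * (\<Sum>x\<in>{0..int n - 1 - k}. max 0 (b x - exp e * b (x - 1)))"
      unfolding bk by (rule fwd_bound) (use z e k in \<open>auto simp: b_def\<close>)
    also have "\<dots> \<le> exp (e * real_of_int (int n - 1 - k)) * (\<Sum>x\<in>{0..int n}. max 0 (b x - exp e * b (x - 1)))"
      using k by (intro mult_left_mono sum_mono2) auto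
    also have "\<dots> \<le> exp (e * real_of_int (int n - 1 - k)) * d" using h2 re by simp
    finally show ?thesis by (simp add: mult.commute)
  qed
  show ?thesis
  proof (cases "real_of_int k \<le> (real n - 1) / 2")
    case True
    then have "wt n k = real_of_int k" unfolding wt_def by simp
    then show ?thesis using f by simp
  next
    case False
    then have "wt n k = real_of_int (int n - 1 - k)" unfolding wt_def by simp
    then show ?thesis using g by simp
  qed
qed

lemma P_dp:
  assumes d: "d \<ge> 0" and e: "e \<ge> 0" and n: "n \<ge> 1"
  defines "P \<equiv> (\<lambda>x::int. if x \<in> {0..int n - 1} then d * exp (e * wt n x) else 0)"
  shows "noise_dp e d P"
proof -
  have z: "\<And>x. x \<notin> {0..int n - 1} \<Longrightarrow> P x = 0" unfolding P_def by auto
  have Pnn: "\<And>x. P x \<ge> 0" unfolding P_def using d by auto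
  have w0: "wt n 0 = 0" and wn: "wt n (int n - 1) = 0" unfolding wt_def using n by auto
  have tri1: "\<And>x. wt n x \<le> 1 + wt n (x - 1)" and tri2: "\<And>x. wt n (x - 1) \<le> 1 + wt n x"
    unfolding wt_def by auto
  have m1: "P x \<le> exp e * P (x - 1)" if "1 \<le> x" "x \<le> int n - 1" for x
  proof -
    have "exp (e * wt n x) \<le> exp (e * (1 + wt n (x - 1)))"
      using tri1[of x] e by (simp add: mult_left_mono)
    also have "\<dots> = exp e * exp (e * wt n (x - 1))" by (simp add: distrib_left exp_add)
    finally show ?thesis unfolding P_def using that d by (auto simp: mult_left_mono algebra_simps)
  qed
  have m2: "P (x - 1) \<le> exp e * P x" if "1 \<le> x" "x \<le> int n - 1" for x
  proof -
    have "exp (e * wt n (x - 1)) \<le> exp (e * (1 + wt n x))"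
      using tri2[of x] e by (simp add: mult_left_mono)
    also have "\<dots> = exp e * exp (e * wt n x)" by (simp add: distrib_left exp_add)
    finally show ?thesis unfolding P_def using that d by (auto simp: mult_left_mono algebra_simps)
  qed
  have A: "(\<Sum>x\<in>{0..int n}. max 0 (P x - exp e * P (x - 1))) \<le> (\<Sum>x\<in>{0..int n}. if x = 0 then d else 0)"
  proof (rule sum_mono)
    fix x assume x: "x \<in> {0..int n}"
    show "max 0 (P x - exp e * P (x - 1)) \<le> (if x = 0 then d else 0)"
    proof (cases "x = 0")
      case True then show ?thesis using w0 d unfolding P_def by auto
    next
      case False
      show ?thesis
      proof (cases "x = int n")
        case True then show ?thesis using False z[of x] Pnn[of "x-1"] by simp
      next
        case False2: False
        then show ?thesis using False x m1[of x] by auto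
      qed
    qed
  qed
  have B: "(\<Sum>x\<in>{0..int n}. max 0 (P (x - 1) - exp e * P x)) \<le> (\<Sum>x\<in>{0..int n}. if x = int n then d else 0)"
  proof (rule sum_mono)
    fix x assume x: "x \<in> {0..int n}"
    show "max 0 (P (x - 1) - exp e * P x) \<le> (if x = int n then d else 0)"
    proof (cases "x = int n")
      case True then show ?thesis using wn d n unfolding P_def by auto
    next
      case False
      show ?thesis
      proof (cases "x = 0")
        case True then show ?thesis using False z[of "x - 1"] Pnn[of x] by simp
      next
        case False2: False
        then show ?thesis using False x m2[of x] by auto
      qed
    qed
  qed
  have C: "hockey_stick e P (shift_dist P) = (\<Sum>x\<in>{0..int n}. max 0 (P x - exp e * P (x - 1)))"
    by (rule hs_fwd) (rule z)
  have D: "hockey_stick e (shift_dist P) P = (\<Sum>x\<in>{0..int n}. max 0 (P (x - 1) - exp e * P x))"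
    by (rule hs_bwd) (rule z)
  show ?thesis unfolding noise_dp_def
    using A B C D by simp
qed

theorem mainTheorem14:
  fixes n :: nat and \<delta> :: real
  assumes "odd n" and "n > 2"
  defines "\<mu> \<equiv> (real n - 1) / 2"
  shows "(0 < \<delta> \<and> \<delta> \<le> 1 / real n \<longrightarrow>
           (\<exists>!e::real. 0 \<le> e \<and> \<delta> * (\<Sum>x\<in>{0..int n - 1}. exp (e * (\<mu> - \<bar>real_of_int x - \<mu>\<bar>))) = 1)
         \<and> (\<forall>es::real. 0 \<le> es \<and> \<delta> * (\<Sum>x\<in>{0..int n - 1}. exp (es * (\<mu> - \<bar>real_of_int x - \<mu>\<bar>))) = 1 \<longrightarrow>
              (let P = (\<lambda>x::int. if x \<in> {0..int n - 1}
                                 then \<delta> * exp (es * (\<mu> - \<bar>real_of_int x - \<mu>\<bar>)) else 0)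
               in dist_on n P \<and> noise_dp es \<delta> P
                  \<and> (\<forall>X e. 0 \<le> e \<and> dist_on n X \<and> noise_dp e \<delta> X \<longrightarrow> es \<le> e)
                  \<and> (\<forall>X. dist_on n X \<and> noise_dp es \<delta> X \<longrightarrow> X = P))))
       \<and> (1 / real n < \<delta> \<and> \<delta> \<le> 1 \<longrightarrow>
           (let U = (\<lambda>x::int. if x \<in> {0..int n - 1} then 1 / real n else 0)
            in dist_on n U \<and> noise_dp 0 \<delta> U))"
proof -
  obtain m where nm: "n = 2*m+1" using assms(1) oddE by blast
  have m1: "m \<ge> 1" using assms(2) nm by simp
  have wtmu: "\<And>x. \<mu> - \<bar>real_of_int x - \<mu>\<bar> = wt n x" by (simp add: \<mu>_def wt_def)
  have wnn: "\<And>x. x \<in> {0..int n - 1} \<Longrightarrow> wt n x \<ge> 0"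
  proof -
    fix x assume "x \<in> {0..int n - 1}"
    then have "0 \<le> real_of_int x" "real_of_int x \<le> real n - 1" by auto
    then have "\<bar>real_of_int x - (real n - 1) / 2\<bar> \<le> (real n - 1) / 2"
      by (intro abs_leI; simp add: field_simps)
    then show "wt n x \<ge> 0" unfolding wt_def by linarith
  qed
  have mI: "int m \<in> {0..int n - 1}" using nm by auto
  have wm: "wt n (int m) = real m" unfolding wt_def nm by simp
  define F where "F = (\<lambda>e. \<Sum>x\<in>{0..int n - 1}. exp (e * wt n x))"
  have Feq: "\<And>e. (\<Sum>x\<in>{0..int n - 1}. exp (e * wt n x)) = F e" unfolding F_def by simp
  have Fmono: "F e1 < F e2" if "e1 < e2" for e1 e2
    unfolding F_def
  proof (rule sum_strict_mono_ex1)
    show "\<forall>x\<in>{0..int n - 1}. exp (e1 * wt n x) \<le> exp (e2 * wt n x)"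
      using wnn that by (auto intro: mult_right_mono)
    show "\<exists>a\<in>{0..int n - 1}. exp (e1 * wt n a) < exp (e2 * wt n a)"
      using mI wm m1 that by (intro bexI[of _ "int m"]) auto
  qed simp
  have Fle: "F e1 \<le> F e2" if "e1 \<le> e2" for e1 e2
    using Fmono[of e1 e2] that by (cases "e1 = e2") auto
  have F0: "F 0 = real n" unfolding F_def by simp
  have Fm: "F e \<ge> exp (e * real m)" for e
  proof -
    have "exp (e * wt n (int m)) \<le> F e" unfolding F_def
      by (rule member_le_sum) (use mI in auto)
    then show ?thesis using wm by simp
  qed
  have part1: "(\<exists>!e::real. 0 \<le> e \<and> \<delta> * F e = 1)
     \<and> (\<forall>es::real. 0 \<le> es \<and> \<delta> * F es = 1 \<longrightarrow>
              (let P = (\<lambda>x::int. if x \<in> {0..int n - 1}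
                                 then \<delta> * exp (es * wt n x) else 0)
               in dist_on n P \<and> noise_dp es \<delta> P
                  \<and> (\<forall>X e. 0 \<le> e \<and> dist_on n X \<and> noise_dp e \<delta> X \<longrightarrow> es \<le> e)
                  \<and> (\<forall>X. dist_on n X \<and> noise_dp es \<delta> X \<longrightarrow> X = P)))"
    if dpos: "0 < \<delta>" and dle: "\<delta> \<le> 1 / real n"
  proof
    have g0: "\<delta> * F 0 \<le> 1" using dle assms(2) F0 by (simp add: field_simps)
    have g1: "1 \<le> \<delta> * F (1/\<delta>)"
    proof -
      have "1 + 1/\<delta> * real m \<le> exp (1/\<delta> * real m)" by (rule exp_ge_add_one_self)
      also have "\<dots> \<le> F (1/\<delta>)" by (rule Fm)
      finally have A: "1 + 1/\<delta> * real m \<le> F (1/\<delta>)" .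
      have "\<delta> * (1 + 1/\<delta> * real m) \<le> \<delta> * F (1/\<delta>)"
        using mult_left_mono[OF A] dpos by simp
      moreover have "\<delta> * (1 + 1/\<delta> * real m) = \<delta> + real m" using dpos by (simp add: field_simps)
      ultimately show ?thesis using m1 dpos by linarith
    qed
    have cont: "\<forall>x. 0 \<le> x \<and> x \<le> 1/\<delta> \<longrightarrow> isCont (\<lambda>e. \<delta> * F e) x"
      unfolding F_def by (intro allI impI continuous_intros)
    obtain e0 where e0: "0 \<le> e0" "\<delta> * F e0 = 1"
      using IVT[of "\<lambda>e. \<delta> * F e" 0 1 "1/\<delta>", OF g0 g1 _ cont] dpos by auto
    show "\<exists>!e::real. 0 \<le> e \<and> \<delta> * F e = 1"
    proof (rule ex1I[of _ e0])
      show "0 \<le> e0 \<and> \<delta> * F e0 = 1" using e0 by simp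
      fix e assume "0 \<le> e \<and> \<delta> * F e = 1"
      then have "\<delta> * F e = \<delta> * F e0" using e0 by simp
      then have "F e = F e0" using dpos by simp
      then show "e = e0" using Fmono[of e e0] Fmono[of e0 e]
        by (cases e e0 rule: linorder_cases) auto
    qed
  next
    show "\<forall>es::real. 0 \<le> es \<and> \<delta> * F es = 1 \<longrightarrow>
              (let P = (\<lambda>x::int. if x \<in> {0..int n - 1}
                                 then \<delta> * exp (es * wt n x) else 0)
               in dist_on n P \<and> noise_dp es \<delta> P
                  \<and> (\<forall>X e. 0 \<le> e \<and> dist_on n X \<and> noise_dp e \<delta> X \<longrightarrow> es \<le> e)
                  \<and> (\<forall>X. dist_on n X \<and> noise_dp es \<delta> X \<longrightarrow> X = P))"
    proof (intro allI impI)
      fix es :: real assume es: "0 \<le> es \<and> \<delta> * F es = 1"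
      define P where "P = (\<lambda>x::int. if x \<in> {0..int n - 1} then \<delta> * exp (es * wt n x) else 0)"
      have sumP: "(\<Sum>x\<in>{0..int n - 1}. P x) = 1"
        using es unfolding P_def F_def by (simp add: sum_distrib_left)
      have distP: "dist_on n P" unfolding dist_on_def
        using sumP dpos by (auto simp: P_def)
      have dpP: "noise_dp es \<delta> P" unfolding P_def
        by (rule P_dp) (use dpos es assms(2) in auto)
      have opt: "es \<le> e" if "0 \<le> e" "dist_on n X" "noise_dp e \<delta> X" for X e
      proof (rule ccontr)
        assume "\<not> es \<le> e"
        then have "F e < F es" using Fmono by simp
        have "1 = (\<Sum>x\<in>{0..int n - 1}. X x)" using that unfolding dist_on_def by simp
        also have "\<dots> \<le> (\<Sum>x\<in>{0..int n - 1}. \<delta> * exp (e * wt n x))"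
          by (rule sum_mono) (use key_bound[OF that(2,3,1)] in auto)
        also have "\<dots> = \<delta> * F e" unfolding F_def by (simp add: sum_distrib_left)
        also have "\<dots> < \<delta> * F es" using \<open>F e < F es\<close> dpos by simp
        finally show False using es by simp
      qed
      have uniq: "X = P" if "dist_on n X" "noise_dp es \<delta> X" for X
      proof
        fix x
        have z: "\<And>x. x \<notin> {0..int n - 1} \<Longrightarrow> X x = 0" using that unfolding dist_on_def by auto
        have le: "\<forall>x\<in>{0..int n - 1}. X x \<le> P x"
          using key_bound[OF that(1,2)] es unfolding P_def by auto
        have eq: "(\<Sum>x\<in>{0..int n - 1}. X x) = (\<Sum>x\<in>{0..int n - 1}. P x)"
          using that sumP unfolding dist_on_def by simp
        show "X x = P x"
        proof (cases "x \<in> {0..int n - 1}")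
          case True
          show ?thesis
          proof (rule ccontr)
            assume "X x \<noteq> P x"
            then have "X x < P x" using le True by force
            then have "(\<Sum>x\<in>{0..int n - 1}. X x) < (\<Sum>x\<in>{0..int n - 1}. P x)"
              using le True by (intro sum_strict_mono_ex1) auto
            then show False using eq by simp
          qed
        next
          case False
          then show ?thesis using z[OF False] unfolding P_def by auto
        qed
      qed
      show "let P = (\<lambda>x::int. if x \<in> {0..int n - 1} then \<delta> * exp (es * wt n x) else 0)
               in dist_on n P \<and> noise_dp es \<delta> P
                  \<and> (\<forall>X e. 0 \<le> e \<and> dist_on n X \<and> noise_dp e \<delta> X \<longrightarrow> es \<le> e)
                  \<and> (\<forall>X. dist_on n X \<and> noise_dp es \<delta> X \<longrightarrow> X = P)"
        unfolding Let_def P_def[symmetric] using distP dpP opt uniq by blast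
    qed
  qed
  have part2: "let U = (\<lambda>x::int. if x \<in> {0..int n - 1} then 1 / real n else 0)
            in dist_on n U \<and> noise_dp 0 \<delta> U" if "1 / real n < \<delta>" "\<delta> \<le> 1"
  proof -
    define U where "U = (\<lambda>x::int. if x \<in> {0..int n - 1} then 1 / real n else 0)"
    have U: "U = (\<lambda>x::int. if x \<in> {0..int n - 1} then 1 / real n * exp (0 * wt n x) else 0)"
      unfolding U_def by (auto simp: fun_eq_iff)
    have dp: "noise_dp 0 (1 / real n) U" unfolding U
      by (rule P_dp) (use assms(2) in auto)
    have dpU: "noise_dp 0 \<delta> U" using dp that unfolding noise_dp_def by auto
    have cardn: "card {0..int n - 1} = n" by simp
    have "dist_on n U" unfolding dist_on_def U_def using assms(2) cardn by auto
    then show ?thesis using dpU unfolding Let_def U_def by simp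
  qed
  show ?thesis unfolding wtmu Feq using part1 part2 by blast
qed

end
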